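(* Let $k\ge 3$, $m\ge 2$. Identify $\mathfrak a=\mathfrak{sl}(2,\mathbb R)\times\mathfrak{gl}(m,\mathbb R)$ with its image in $\mathfrak{gl}(V)=\mathfrak{gl}(V_k)\otimes\mathfrak{gl}(W)$, and consider the $\mathfrak a$-module $\mathfrak{gl}(V)/\mathfrak a$ (with the adjoint action). The space of $y$-invariant elements (elements annihilated by $y$) of $\mathfrak{gl}(V)/\mathfrak a$ is the direct sum of (the images of) the $\mathfrak{gl}(m,\mathbb R)$-modules \[ A_2=\mathbb R y\otimes\mathfrak{sl}(W),\qquad A_{i+1}=\mathbb R y^i\otimes\mathfrak{gl}(W),\quad i=2,\dots,k, \] where $y^i$ denotes the $i$-th power of the endomorphism $y$ of $V_k$. Moreover, for every $\phi\in A_i$ the cochain $c_\phi$ on $\mathfrak g_-=\mathbb R x\oplus V$ given by $c_\phi(x\wedge v)=\phi(v)$, $c_\phi(V\wedge V)=0$, has degree $i$.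
   Context: $x=\begin{pmatrix}0&0\\1&0\end{pmatrix}$, $y=\begin{pmatrix}0&1\\0&0\end{pmatrix}$, $h=\begin{pmatrix}-1&0\\0&1\end{pmatrix}$ in $\mathfrak{sl}(2,\mathbb R)$; $V_k=S^k(\mathbb R^2)$ with basis $v^i=f_2^{k-i}f_1^i/i!$ ($f_1,f_2$ the standard basis of $\mathbb R^2$); $W=\mathbb R^m$ the standard $\mathfrak{gl}(m,\mathbb R)$-module; $V=V_k\otimes W$ with the natural faithful action of $\mathfrak a$. $\mathfrak g=\mathfrak a\ltimes V$ ($V$ abelian ideal) is graded by $\mathfrak g_1=\mathbb R y$, $\mathfrak g_0=\mathbb R h\oplus\mathfrak{gl}(m,\mathbb R)$, $\mathfrak g_{-1}=\mathbb R x\oplus v^k\otimes W$, $\mathfrak g_{-i}=v^{k+1-i}\otimes W$ for $2\le i\le k+1$, and $\mathfrak g_-=\bigoplus_{i<0}\mathfrak g_i=\mathbb R x\oplus V$. A cochain $c\in\operatorname{Hom}(\wedge^2\mathfrak g_-,\mathfrak g)$ has degree $r$ if $c(\mathfrak g_i\wedge\mathfrak g_j)\subset\mathfrak g_{i+j+r}$ for all $i,j$. *)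

theory Defs
  imports Complex_Main
begin

(* V_k = S^k(R^2) has basis v^0..v^k (index j in {0..k}); W = R^m has basis e_0..e_{m-1}.
   V = V_k \<otimes> W has basis v^j \<otimes> e_a, indexed by (j,a) \<in> {0..k} \<times> {0..<m}.
   Endomorphisms of V: matrices (nat\<times>nat) \<Rightarrow> (nat\<times>nat) \<Rightarrow> real,
   entry M p q = coefficient of basis vector p in M(basis vector q). *)

definition IV :: "nat \<Rightarrow> nat \<Rightarrow> (nat \<times> nat) set" where
  "IV k m = {0..k} \<times> {0..<m}"

definition vecV :: "nat \<Rightarrow> nat \<Rightarrow> (nat \<times> nat \<Rightarrow> real) \<Rightarrow> bool" where
  "vecV k m v \<longleftrightarrow> (\<forall>p. p \<notin> IV k m \<longrightarrow> v p = 0)"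

definition glV :: "nat \<Rightarrow> nat \<Rightarrow> (nat \<times> nat \<Rightarrow> nat \<times> nat \<Rightarrow> real) set" where
  "glV k m = {M. \<forall>p q. (p \<notin> IV k m \<or> q \<notin> IV k m) \<longrightarrow> M p q = 0}"

definition glW :: "nat \<Rightarrow> (nat \<Rightarrow> nat \<Rightarrow> real) set" where
  "glW m = {B. \<forall>a b. (a \<ge> m \<or> b \<ge> m) \<longrightarrow> B a b = 0}"

definition slW :: "nat \<Rightarrow> (nat \<Rightarrow> nat \<Rightarrow> real) set" where
  "slW m = {B \<in> glW m. (\<Sum>a<m. B a a) = 0}"

definition idW :: "nat \<Rightarrow> nat \<Rightarrow> nat \<Rightarrow> real" where
  "idW m a b = (if a = b \<and> a < m then 1 else 0)"

definition idK :: "nat \<Rightarrow> nat \<Rightarrow> nat \<Rightarrow> real" where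
  "idK k j i = (if j = i \<and> i \<le> k then 1 else 0)"

(* Matrices of x, y, h acting (as derivations) on V_k in the basis v^i = f2^(k-i) f1^i / i!:
   x f1 = f2, x f2 = 0  ==> x v^i = v^(i-1)  (x v^0 = 0)
   y f2 = f1, y f1 = 0  ==> y v^i = (k-i)(i+1) v^(i+1)  (y v^k = 0)
   h f1 = -f1, h f2 = f2 ==> h v^i = (k-2i) v^i.
   Entry (j,i) = coefficient of v^j in X v^i. *)
definition rho_x :: "nat \<Rightarrow> nat \<Rightarrow> nat \<Rightarrow> real" where
  "rho_x k j i = (if 1 \<le> i \<and> i \<le> k \<and> j = i - 1 then 1 else 0)"

definition rho_y :: "nat \<Rightarrow> nat \<Rightarrow> nat \<Rightarrow> real" where
  "rho_y k j i = (if i < k \<and> j = i + 1 then real ((k - i) * (i + 1)) else 0)"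

definition rho_h :: "nat \<Rightarrow> nat \<Rightarrow> nat \<Rightarrow> real" where
  "rho_h k j i = (if i \<le> k \<and> j = i then real k - 2 * real i else 0)"

definition mmul :: "'i set \<Rightarrow> ('i \<Rightarrow> 'i \<Rightarrow> real) \<Rightarrow> ('i \<Rightarrow> 'i \<Rightarrow> real) \<Rightarrow> 'i \<Rightarrow> 'i \<Rightarrow> real" where
  "mmul S M N p q = (\<Sum>r\<in>S. M p r * N r q)"

fun mpow :: "'i set \<Rightarrow> nat \<Rightarrow> ('i \<Rightarrow> 'i \<Rightarrow> real) \<Rightarrow> 'i \<Rightarrow> 'i \<Rightarrow> real" where
  "mpow S 0 M = (\<lambda>p q. if p = q \<and> p \<in> S then 1 else 0)"
| "mpow S (Suc n) M = mmul S M (mpow S n M)"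

definition commV :: "nat \<Rightarrow> nat \<Rightarrow> (nat \<times> nat \<Rightarrow> nat \<times> nat \<Rightarrow> real) \<Rightarrow> (nat \<times> nat \<Rightarrow> nat \<times> nat \<Rightarrow> real)
    \<Rightarrow> nat \<times> nat \<Rightarrow> nat \<times> nat \<Rightarrow> real" where
  "commV k m M N = (\<lambda>p q. mmul (IV k m) M N p q - mmul (IV k m) N M p q)"

definition tens :: "(nat \<Rightarrow> nat \<Rightarrow> real) \<Rightarrow> (nat \<Rightarrow> nat \<Rightarrow> real) \<Rightarrow> nat \<times> nat \<Rightarrow> nat \<times> nat \<Rightarrow> real" where
  "tens A B = (\<lambda>(j, a) (i, b). A j i * B a b)"

(* image of \<a> = sl(2,R) \<times> gl(m,R) in gl(V): X \<otimes> 1 + 1 \<otimes> B *)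
definition aset :: "nat \<Rightarrow> nat \<Rightarrow> (nat \<times> nat \<Rightarrow> nat \<times> nat \<Rightarrow> real) set" where
  "aset k m = {M. \<exists>\<alpha> \<beta> \<gamma> B. B \<in> glW m \<and>
      M = (\<lambda>p q. tens (\<lambda>j i. \<alpha> * rho_x k j i + \<beta> * rho_y k j i + \<gamma> * rho_h k j i) (idW m) p q
                 + tens (idK k) B p q)}"

definition Yop :: "nat \<Rightarrow> nat \<Rightarrow> nat \<times> nat \<Rightarrow> nat \<times> nat \<Rightarrow> real" where
  "Yop k m = tens (rho_y k) (idW m)"

definition Amod :: "nat \<Rightarrow> nat \<Rightarrow> nat \<Rightarrow> (nat \<times> nat \<Rightarrow> nat \<times> nat \<Rightarrow> real) set" where
  "Amod k m i = (if i = 2 then {M. \<exists>c B. B \<in> slW m \<and> M = tens (\<lambda>a b. c * rho_y k a b) B}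
                 else {M. \<exists>c B. B \<in> glW m \<and> M = tens (\<lambda>a b. c * mpow {0..k} (i - 1) (rho_y k) a b) B})"

(* elements of g = \<a> \<ltimes> V = sl(2) \<oplus> gl(m) \<oplus> V:
   coefficients of x, y, h, a gl(m)-matrix and a vector of V *)
record gel =
  gx :: real
  gy :: real
  gh :: real
  gB :: "nat \<Rightarrow> nat \<Rightarrow> real"
  gv :: "nat \<times> nat \<Rightarrow> real"

(* the homogeneous component g_d of the grading:
   g_1 = R y, g_0 = R h \<oplus> gl(m), g_(-1) = R x \<oplus> v^k \<otimes> W, g_(-i) = v^(k+1-i) \<otimes> W *)
definition gr :: "nat \<Rightarrow> nat \<Rightarrow> int \<Rightarrow> gel set" where
  "gr k m d = {u. gB u \<in> glW m \<and> vecV k m (gv u)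
      \<and> (gx u \<noteq> 0 \<longrightarrow> d = -1) \<and> (gy u \<noteq> 0 \<longrightarrow> d = 1) \<and> (gh u \<noteq> 0 \<longrightarrow> d = 0)
      \<and> (gB u \<noteq> (\<lambda>a b. 0) \<longrightarrow> d = 0)
      \<and> (\<forall>j a. gv u (j, a) \<noteq> 0 \<longrightarrow> d = - (int k + 1 - int j))}"

(* a cochain c : \<wedge>^2 g_- \<rightarrow> g (given as an alternating bilinear map on g_-) has degree r *)
definition cochain_degree :: "nat \<Rightarrow> nat \<Rightarrow> (gel \<Rightarrow> gel \<Rightarrow> gel) \<Rightarrow> int \<Rightarrow> bool" where
  "cochain_degree k m c r \<longleftrightarrow>
     (\<forall>i j u w. i < 0 \<longrightarrow> j < 0 \<longrightarrow> u \<in> gr k m i \<longrightarrow> w \<in> gr k m j \<longrightarrow> c u w \<in> gr k m (i + j + r))"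

definition mapp :: "nat \<Rightarrow> nat \<Rightarrow> (nat \<times> nat \<Rightarrow> nat \<times> nat \<Rightarrow> real) \<Rightarrow> (nat \<times> nat \<Rightarrow> real) \<Rightarrow> nat \<times> nat \<Rightarrow> real" where
  "mapp k m M v p = (\<Sum>q\<in>IV k m. M p q * v q)"

(* c_\<phi>: the alternating bilinear map on g_- = R x \<oplus> V with c(x \<wedge> v) = \<phi>(v), c(V \<wedge> V) = 0:
   c(\<alpha> x + v, \<alpha>' x + v') = \<alpha> \<phi>(v') - \<alpha>' \<phi>(v) *)
definition cphi :: "nat \<Rightarrow> nat \<Rightarrow> (nat \<times> nat \<Rightarrow> nat \<times> nat \<Rightarrow> real) \<Rightarrow> gel \<Rightarrow> gel \<Rightarrow> gel" where
  "cphi k m \<phi> u w = \<lparr>gx = 0, gy = 0, gh = 0, gB = (\<lambda>a b. 0),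
      gv = (\<lambda>p. gx u * mapp k m \<phi> (gv w) p - gx w * mapp k m \<phi> (gv u) p)\<rparr>"

end

theory Submission
  imports Defs
begin

definition cc :: "nat \<Rightarrow> nat \<Rightarrow> real" where "cc k i = real ((k - i) * (i + 1))"
definition pc :: "nat \<Rightarrow> nat \<Rightarrow> nat \<Rightarrow> real" where "pc k i n = (\<Prod>t\<in>{i..<i+n}. cc k t)"
definition ypow :: "nat \<Rightarrow> nat \<Rightarrow> nat \<Rightarrow> nat \<Rightarrow> real" where
  "ypow k n j i = (if j = i + n \<and> j \<le> k then pc k i n else 0)"
definition cyl :: "nat \<Rightarrow> nat \<Rightarrow> (nat \<times> nat \<Rightarrow> nat \<times> nat \<Rightarrow> real) \<Rightarrow> nat \<Rightarrow> nat \<Rightarrow> nat \<Rightarrow> nat \<Rightarrow> real" where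
  "cyl k m F j a i b = (if 1 \<le> j \<and> j \<le> k \<and> a < m then cc k (j-1) * F (j-1,a) (i,b) else 0)
     - (if i < k \<and> b < m then F (j,a) (i+1,b) * cc k i else 0)"
definition commy :: "nat \<Rightarrow> (nat \<Rightarrow> nat \<Rightarrow> real) \<Rightarrow> nat \<Rightarrow> nat \<Rightarrow> real" where
  "commy k A j i = (if 1 \<le> j \<and> j \<le> k then cc k (j-1) * A (j-1) i else 0)
     - (if i < k then A j (i+1) * cc k i else 0)"

lemma cc_pos: "i < k \<Longrightarrow> cc k i > 0"
proof -
  assume "i < k" hence "(k - i) * (i + 1) > 0" by simp
  thus ?thesis unfolding cc_def by (simp only: of_nat_0_less_iff)
qed
lemma cc_nonneg: "cc k i \<ge> 0" by (simp add: cc_def)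
lemma cc_kk: "cc k k = 0" by (simp add: cc_def)
lemma cc_real: "i \<le> k \<Longrightarrow> cc k i = (real k - real i) * (real i + 1)"
  unfolding cc_def by (simp only: of_nat_mult of_nat_diff of_nat_add of_nat_1)
lemma rho_y_cc: "rho_y k j i = (if i < k \<and> j = i + 1 then cc k i else 0)"
  by (simp add: rho_y_def cc_def)

lemma pc_pos: "i + n \<le> k \<Longrightarrow> pc k i n > 0"
  unfolding pc_def by (rule prod_pos) (auto intro: cc_pos)
lemma pc_Suc1: "pc k i (Suc n) = pc k i n * cc k (i+n)"
  unfolding pc_def by (simp add: prod.atLeastLessThan_Suc)
lemma pc_Suc2: "pc k i (Suc n) = cc k i * pc k (Suc i) n"
  unfolding pc_def by (simp add: prod.atLeast_Suc_lessThan)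
lemma pc_0: "pc k i 0 = 1" by (simp add: pc_def)
lemma pc_1: "pc k i (Suc 0) = cc k i" by (simp add: pc_def)
lemma pc_swap: "cc k (i+n) * pc k i n = pc k (Suc i) n * cc k i"
  by (metis pc_Suc1 pc_Suc2 mult.commute)

lemma rho_y_ypow: "rho_y k = ypow k 1"
  by (auto simp: fun_eq_iff rho_y_cc ypow_def pc_1)
lemma idK_ypow: "idK k = ypow k 0"
  by (auto simp: fun_eq_iff idK_def ypow_def pc_0)

lemma L1: "(\<Sum>l\<in>{0..k}. rho_y k j l * h l) = (if 1 \<le> j \<and> j \<le> k then cc k (j-1) * h (j-1) else 0)"
proof -
  have "(\<Sum>l\<in>{0..k}. rho_y k j l * h l) = (\<Sum>l\<in>{0..k}. if l = j - 1 then (if 1 \<le> j \<and> j \<le> k then cc k (j-1) * h (j-1) else 0) else 0)"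
    by (rule sum.cong) (auto simp: rho_y_cc)
  also have "\<dots> = (if 1 \<le> j \<and> j \<le> k then cc k (j-1) * h (j-1) else 0)"
    by (auto simp: sum.delta)
  finally show ?thesis .
qed

lemma L2: "(\<Sum>l\<in>{0..k}. h l * rho_y k l i) = (if i < k then h (i+1) * cc k i else 0)"
proof -
  have "(\<Sum>l\<in>{0..k}. h l * rho_y k l i) = (\<Sum>l\<in>{0..k}. if l = i + 1 then (if i < k then h (i+1) * cc k i else 0) else 0)"
    by (rule sum.cong) (auto simp: rho_y_cc)
  also have "\<dots> = (if i < k then h (i+1) * cc k i else 0)"
    by (simp add: sum.delta)
  finally show ?thesis .
qed

lemma L3: "(\<Sum>c\<in>{0..<m}. idW m a c * g c) = (if a < m then g a else 0)"
proof -
  have "(\<Sum>c\<in>{0..<m}. idW m a c * g c) = (\<Sum>c\<in>{0..<m}. if c = a then (if a < m then g a else 0) else 0)"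
    by (rule sum.cong) (auto simp: idW_def)
  thus ?thesis by (simp add: sum.delta)
qed

lemma L4: "(\<Sum>c\<in>{0..<m}. g c * idW m c b) = (if b < m then g b else 0)"
proof -
  have "(\<Sum>c\<in>{0..<m}. g c * idW m c b) = (\<Sum>c\<in>{0..<m}. if c = b then (if b < m then g b else 0) else 0)"
    by (rule sum.cong) (auto simp: idW_def)
  thus ?thesis by (simp add: sum.delta)
qed

lemma mmul_IV: "mmul (IV k m) M N p q = (\<Sum>l\<in>{0..k}. \<Sum>c\<in>{0..<m}. M p (l,c) * N (l,c) q)"
  unfolding mmul_def IV_def by (simp add: sum.cartesian_product)

lemma CY: "commV k m (Yop k m) F (j,a) (i,b) = cyl k m F j a i b"
proof -
  have 1: "mmul (IV k m) (Yop k m) F (j,a) (i,b) = (if 1 \<le> j \<and> j \<le> k \<and> a < m then cc k (j-1) * F (j-1,a) (i,b) else 0)"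
  proof -
    have "mmul (IV k m) (Yop k m) F (j,a) (i,b) = (\<Sum>l\<in>{0..k}. rho_y k j l * (\<Sum>c\<in>{0..<m}. idW m a c * F (l,c) (i,b)))"
      unfolding mmul_IV Yop_def tens_def by (simp add: sum_distrib_left mult.assoc)
    also have "\<dots> = (\<Sum>l\<in>{0..k}. rho_y k j l * (if a < m then F (l,a) (i,b) else 0))"
      by (simp add: L3)
    also have "\<dots> = (if 1 \<le> j \<and> j \<le> k \<and> a < m then cc k (j-1) * F (j-1,a) (i,b) else 0)"
      by (subst L1) auto
    finally show ?thesis .
  qed
  have 2: "mmul (IV k m) F (Yop k m) (j,a) (i,b) = (if i < k \<and> b < m then F (j,a) (i+1,b) * cc k i else 0)"
  proof -
    have "mmul (IV k m) F (Yop k m) (j,a) (i,b) = (\<Sum>l\<in>{0..k}. (\<Sum>c\<in>{0..<m}. F (j,a) (l,c) * idW m c b) * rho_y k l i)"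
      unfolding mmul_IV Yop_def tens_def by (simp add: sum_distrib_right sum_distrib_left mult_ac)
    also have "\<dots> = (\<Sum>l\<in>{0..k}. (if b < m then F (j,a) (l,b) else 0) * rho_y k l i)"
      by (simp add: L4)
    also have "\<dots> = (if i < k \<and> b < m then F (j,a) (i+1,b) * cc k i else 0)"
      by (subst L2) auto
    finally show ?thesis .
  qed
  show ?thesis unfolding commV_def cyl_def using 1 2 by simp
qed

lemma mpow_ypow: "mpow {0..k} n (rho_y k) = ypow k n"
proof (induction n)
  case 0 show ?case by (auto simp: fun_eq_iff ypow_def pc_0)
next
  case (Suc n)
  show ?case
  proof (intro ext)
    fix j i
    have "mpow {0..k} (Suc n) (rho_y k) j i = (\<Sum>l\<in>{0..k}. rho_y k j l * ypow k n l i)"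
      by (simp add: Suc mmul_def)
    also have "\<dots> = (if 1 \<le> j \<and> j \<le> k then cc k (j-1) * ypow k n (j-1) i else 0)" by (rule L1)
    also have "\<dots> = ypow k (Suc n) j i"
      by (auto simp: ypow_def pc_Suc1 mult.commute)
    finally show "mpow {0..k} (Suc n) (rho_y k) j i = ypow k (Suc n) j i" .
  qed
qed

lemma cyl_tens: "B \<in> glW m \<Longrightarrow> cyl k m (tens A B) j a i b = commy k A j i * B a b"
  by (auto simp: cyl_def commy_def tens_def glW_def algebra_simps)

lemma commy_ypow: "commy k (ypow k n) j i = 0"
  by (auto simp: commy_def ypow_def pc_swap)

lemma commy_x: "commy k (rho_x k) j i = - rho_h k j i"
  by (auto simp: commy_def rho_x_def rho_h_def cc_real of_nat_diff algebra_simps Suc_le_eq)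

lemma commy_h: "commy k (rho_h k) j i = 2 * rho_y k j i"
  by (auto simp: commy_def rho_y_cc rho_h_def cc_real algebra_simps)

lemma tele: "(\<Sum>j<Suc n. (if 1 \<le> j then G (j-1) else 0) - G j) = - (G n :: real)"
  by (induction n) auto

lemma trh: "(\<Sum>j<Suc n. real k - 2 * real j) = real (Suc n) * real k - real n * (real n + 1)"
  by (induction n) (auto simp: algebra_simps)


lemma Amod_form:
  assumes "r \<in> {2..k+1}" "\<phi> \<in> Amod k m r"
  shows "\<exists>c B. B \<in> glW m \<and> (r = 2 \<longrightarrow> (\<Sum>a<m. B a a) = 0) \<and> \<phi> = tens (\<lambda>a b. c * ypow k (r-1) a b) B"
proof (cases "r = 2")
  case True
  with assms obtain c B where "B \<in> slW m" "\<phi> = tens (\<lambda>a b. c * rho_y k a b) B"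
    unfolding Amod_def by auto
  thus ?thesis using True by (auto simp: slW_def rho_y_ypow)
next
  case False
  with assms obtain c B where "B \<in> glW m" "\<phi> = tens (\<lambda>a b. c * mpow {0..k} (r-1) (rho_y k) a b) B"
    unfolding Amod_def by auto
  thus ?thesis using False by (auto simp: mpow_ypow)
qed

lemma mapp_nz:
  assumes "B \<in> glW m" "mapp k m (tens (\<lambda>a b. c * ypow k n a b) B) v (j',a) \<noteq> 0"
  shows "\<exists>j0 b. v (j0,b) \<noteq> 0 \<and> j' = j0 + n \<and> j' \<le> k \<and> a < m"
proof -
  from assms(2) obtain q where q: "q \<in> IV k m" "tens (\<lambda>a b. c * ypow k n a b) B (j',a) q * v q \<noteq> 0"
    unfolding mapp_def by (meson sum.not_neutral_contains_not_neutral)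
  obtain j0 b where qq: "q = (j0,b)" by (cases q)
  have "B a b \<noteq> 0" using q qq by (auto simp: tens_def)
  hence "a < m" using assms(1) leI unfolding glW_def by blast
  moreover have "ypow k n j' j0 \<noteq> 0" using q qq by (auto simp: tens_def)
  hence "j' = j0 + n \<and> j' \<le> k" by (auto simp: ypow_def split: if_splits)
  moreover have "v (j0,b) \<noteq> 0" using q qq by auto
  ultimately show ?thesis by blast
qed

lemma part3:
  assumes "r \<in> {2..k+1}" "\<phi> \<in> Amod k m r"
  shows "cochain_degree k m (cphi k m \<phi>) (int r)"
proof -
  obtain c B where B: "B \<in> glW m" and phi: "\<phi> = tens (\<lambda>a b. c * ypow k (r-1) a b) B"
    using Amod_form[OF assms] by blast
  have r2: "r \<ge> 2" using assms(1) by auto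
  note nz = mapp_nz[OF B, where c=c and n="r-1" and k=k, folded phi]
  show ?thesis unfolding cochain_degree_def
  proof (intro allI impI)
    fix i j u w
    assume "i < (0::int)" "j < (0::int)" and u: "u \<in> gr k m i" and w: "w \<in> gr k m j"
    have vec: "vecV k m (\<lambda>p. gx u * mapp k m \<phi> (gv w) p - gx w * mapp k m \<phi> (gv u) p)"
      unfolding vecV_def
    proof (intro allI impI)
      fix p assume "p \<notin> IV k m"
      then obtain j' a where p: "p = (j',a)" "\<not> (j' \<le> k \<and> a < m)" by (cases p) (auto simp: IV_def)
      have "mapp k m \<phi> (gv w) p = 0" "mapp k m \<phi> (gv u) p = 0"
        using nz[where v="gv w" and j'=j' and a=a] nz[where v="gv u" and j'=j' and a=a] p by auto
      thus "gx u * mapp k m \<phi> (gv w) p - gx w * mapp k m \<phi> (gv u) p = 0" by simp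
    qed
    have deg: "i + j + int r = - (int k + 1 - int j')"
      if ne: "gx u * mapp k m \<phi> (gv w) (j',a) - gx w * mapp k m \<phi> (gv u) (j',a) \<noteq> 0" for j' a
    proof -
      have "(gx u \<noteq> 0 \<and> mapp k m \<phi> (gv w) (j',a) \<noteq> 0) \<or> (gx w \<noteq> 0 \<and> mapp k m \<phi> (gv u) (j',a) \<noteq> 0)"
        using ne by auto
      thus ?thesis
      proof
        assume h: "gx u \<noteq> 0 \<and> mapp k m \<phi> (gv w) (j',a) \<noteq> 0"
        then obtain j0 b where "gv w (j0,b) \<noteq> 0" "j' = j0 + (r-1)" using nz by blast
        moreover have "i = -1" using u h by (auto simp: gr_def)
        moreover have "j = - (int k + 1 - int j0)" using w \<open>gv w (j0,b) \<noteq> 0\<close> by (auto simp: gr_def)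
        ultimately show ?thesis using r2 by auto
      next
        assume h: "gx w \<noteq> 0 \<and> mapp k m \<phi> (gv u) (j',a) \<noteq> 0"
        then obtain j0 b where "gv u (j0,b) \<noteq> 0" "j' = j0 + (r-1)" using nz by blast
        moreover have "j = -1" using w h by (auto simp: gr_def)
        moreover have "i = - (int k + 1 - int j0)" using u \<open>gv u (j0,b) \<noteq> 0\<close> by (auto simp: gr_def)
        ultimately show ?thesis using r2 by auto
      qed
    qed
    show "cphi k m \<phi> u w \<in> gr k m (i + j + int r)"
      unfolding gr_def cphi_def using vec deg by (auto simp: glW_def)
  qed
qed


lemma zero_aset: "(\<lambda>p q. 0) \<in> aset k m"
proof -
  have "(\<lambda>p q. 0::real) = (\<lambda>p q. tens (\<lambda>j i. 0 * rho_x k j i + 0 * rho_y k j i + 0 * rho_h k j i) (idW m) p q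
                 + tens (idK k) (\<lambda>a b. 0) p q)"
    by (auto simp: fun_eq_iff tens_def)
  moreover have "(\<lambda>a b. 0::real) \<in> glW m" by (simp add: glW_def)
  ultimately show ?thesis unfolding aset_def by blast
qed

lemma ypow_n0: "ypow k n j 0 = (if j = n \<and> j \<le> k then pc k 0 n else 0)"
  by (simp add: ypow_def)

lemma part2:
  assumes k3: "k \<ge> 3" and m2: "m \<ge> 2"
    and psi: "\<forall>i\<in>{2..k+1}. \<psi> i \<in> Amod k m i"
    and sa: "(\<lambda>p q. \<Sum>i\<in>{2..k+1}. \<psi> i p q) \<in> aset k m"
  shows "\<forall>i\<in>{2..k+1}. \<psi> i \<in> aset k m"
proof -
  have "\<forall>i\<in>{2..k+1}. \<exists>c B. B \<in> glW m \<and> (i = 2 \<longrightarrow> (\<Sum>a<m. B a a) = 0) \<and> \<psi> i = tens (\<lambda>a b. c * ypow k (i-1) a b) B"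
    using psi Amod_form by blast
  then obtain cf Bf where cB: "\<And>i. i\<in>{2..k+1} \<Longrightarrow> Bf i \<in> glW m \<and> (i = 2 \<longrightarrow> (\<Sum>a<m. Bf i a a) = 0) \<and> \<psi> i = tens (\<lambda>a b. cf i * ypow k (i-1) a b) (Bf i)"
    by metis
  have pt: "\<psi> i (j,a) (i0,b) = cf i * ypow k (i-1) j i0 * Bf i a b" if "i \<in> {2..k+1}" for i j a i0 b
    using cB[OF that] by (simp add: tens_def)
  from sa obtain \<alpha> \<beta> \<gamma> B where B: "B \<in> glW m" and eq: "(\<lambda>p q. \<Sum>i\<in>{2..k+1}. \<psi> i p q) =
      (\<lambda>p q. tens (\<lambda>j i. \<alpha> * rho_x k j i + \<beta> * rho_y k j i + \<gamma> * rho_h k j i) (idW m) p q + tens (idK k) B p q)"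
    unfolding aset_def by blast
  have col: "cf (n+1) * pc k 0 n * Bf (n+1) a b = (if n = 1 then \<beta> * cc k 0 * idW m a b else 0)"
    if n: "1 \<le> n" "n \<le> k" for n a b
  proof -
    have "(\<Sum>i\<in>{2..k+1}. \<psi> i (n,a) (0,b)) = (\<Sum>i\<in>{2..k+1}. if i = n+1 then cf (n+1) * pc k 0 n * Bf (n+1) a b else 0)"
      by (rule sum.cong) (use n in \<open>auto simp: pt ypow_n0\<close>)
    also have "\<dots> = cf (n+1) * pc k 0 n * Bf (n+1) a b" using n by (simp add: sum.delta)
    finally have "cf (n+1) * pc k 0 n * Bf (n+1) a b = (\<Sum>i\<in>{2..k+1}. \<psi> i (n,a) (0,b))" ..
    also have "\<dots> = (\<alpha> * rho_x k n 0 + \<beta> * rho_y k n 0 + \<gamma> * rho_h k n 0) * idW m a b + idK k n 0 * B a b"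
      using fun_cong[OF fun_cong[OF eq, of "(n,a)"], of "(0,b)"] by (simp add: tens_def)
    also have "\<dots> = (if n = 1 then \<beta> * cc k 0 * idW m a b else 0)"
      using n k3 by (auto simp: rho_x_def rho_y_cc rho_h_def idK_def)
    finally show ?thesis .
  qed
  show ?thesis
  proof
    fix i assume i: "i \<in> {2..k+1}"
    have zero: "\<psi> i = (\<lambda>p q. 0)" if z: "\<And>a b. cf i * Bf i a b = 0"
    proof (intro ext)
      fix p q show "\<psi> i p q = 0"
        using z by (cases p, cases q) (auto simp: pt[OF i])
    qed
    show "\<psi> i \<in> aset k m"
    proof (cases "i = 2")
      case False
      have "cf i * Bf i a b = 0" for a b
      proof -
        have n1: "1 \<le> i-1" "i-1 \<le> k" "i - 1 \<noteq> 1" "i-1+1 = i" using i False by auto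
        have "cf i * pc k 0 (i-1) * Bf i a b = 0" using col[OF n1(1,2), of a b] n1(3,4) by simp
        moreover have "pc k 0 (i-1) > 0" using i by (intro pc_pos) auto
        ultimately show ?thesis by simp
      qed
      thus ?thesis using zero zero_aset by simp
    next
      case True
      have c0: "cc k 0 > 0" using k3 by (intro cc_pos) auto
      have e: "cf 2 * Bf 2 a b = \<beta> * idW m a b" for a b
      proof -
        have "cf 2 * pc k 0 1 * Bf 2 a b = \<beta> * cc k 0 * idW m a b" using col[of 1 a b] k3 by (simp add: numeral_2_eq_2)
        thus ?thesis using c0 by (simp add: pc_1)
      qed
      have "(\<Sum>a<m. cf 2 * Bf 2 a a) = cf 2 * (\<Sum>a<m. Bf 2 a a)" by (simp add: sum_distrib_left)
      also have "\<dots> = 0" using cB[of 2] k3 by auto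
      finally have "0 = (\<Sum>a<m. \<beta> * idW m a a)" using e by simp
      also have "\<dots> = \<beta> * real m" by (simp add: idW_def)
      finally have "\<beta> = 0" using m2 by simp
      hence "cf 2 * Bf 2 a b = 0" for a b using e by simp
      thus ?thesis using zero zero_aset True by simp
    qed
  qed
qed


lemma cyl_add: "cyl k m (\<lambda>p q. F p q + G p q) j a i b = cyl k m F j a i b + cyl k m G j a i b"
  by (simp add: cyl_def algebra_simps)
lemma cyl_diff: "cyl k m (\<lambda>p q. F p q - G p q) j a i b = cyl k m F j a i b - cyl k m G j a i b"
  by (simp add: cyl_def algebra_simps)
lemma sum_if_const: "(\<Sum>n\<in>N. if c then f n else 0) = (if c then (\<Sum>n\<in>N. f n) else (0::real))"
  by (cases c) simp_all
lemma cyl_sum: "cyl k m (\<lambda>p q. \<Sum>n\<in>N. G n p q) j a i b = (\<Sum>n\<in>N. cyl k m (G n) j a i b)"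
  unfolding cyl_def sum_subtractf by (simp add: sum_if_const sum_distrib_left sum_distrib_right)
lemma commy_lin3: "commy k (\<lambda>j i. x * X j i + y * Y j i + z * Z j i) j i
    = x * commy k X j i + y * commy k Y j i + z * commy k Z j i"
  by (simp add: commy_def algebra_simps)
lemma commy_scale: "commy k (\<lambda>j i. c * X j i) j i = c * commy k X j i"
  by (simp add: commy_def algebra_simps)
lemma commy_y: "commy k (rho_y k) j i = 0" by (simp add: rho_y_ypow commy_ypow)
lemma commy_idK: "commy k (idK k) j i = 0" by (simp add: idK_ypow commy_ypow)
lemma idW_glW: "idW m \<in> glW m" by (simp add: glW_def idW_def)

lemma cyl_psi: assumes "r \<in> {2..k+1}" "\<psi> \<in> Amod k m r" shows "cyl k m \<psi> j a i b = 0"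
proof -
  obtain c B where "B \<in> glW m" "\<psi> = tens (\<lambda>a b. c * ypow k (r-1) a b) B"
    using Amod_form[OF assms] by blast
  thus ?thesis by (simp add: cyl_tens commy_scale commy_ypow)
qed

lemma cyl_aset:
  assumes "B \<in> glW m"
  shows "cyl k m (\<lambda>p q. tens (\<lambda>j i. \<alpha> * rho_x k j i + \<beta> * rho_y k j i + \<gamma> * rho_h k j i) (idW m) p q + tens (idK k) B p q) j a i b
     = (2 * \<gamma> * rho_y k j i - \<alpha> * rho_h k j i) * idW m a b"
  using assms by (simp add: cyl_add cyl_tens idW_glW commy_lin3 commy_x commy_h commy_y commy_idK)

lemma part1b:
  assumes a0: "a0 \<in> aset k m" and psi: "\<forall>i\<in>{2..k+1}. \<psi> i \<in> Amod k m i"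
    and phi: "\<phi> = (\<lambda>p q. a0 p q + (\<Sum>i\<in>{2..k+1}. \<psi> i p q))"
  shows "commV k m (Yop k m) \<phi> \<in> aset k m"
proof -
  obtain \<alpha> \<beta> \<gamma> B where B: "B \<in> glW m" and a0e: "a0 = (\<lambda>p q. tens (\<lambda>j i. \<alpha> * rho_x k j i + \<beta> * rho_y k j i + \<gamma> * rho_h k j i) (idW m) p q + tens (idK k) B p q)"
    using a0 unfolding aset_def by blast
  have "commV k m (Yop k m) \<phi> = (\<lambda>p q. tens (\<lambda>j i. 0 * rho_x k j i + (2*\<gamma>) * rho_y k j i + (-\<alpha>) * rho_h k j i) (idW m) p q + tens (idK k) (\<lambda>a b. 0) p q)"
  proof (intro ext)
    fix p q :: "nat \<times> nat"
    obtain j a i b where pq: "p = (j,a)" "q = (i,b)" by (cases p, cases q)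
    have "commV k m (Yop k m) \<phi> p q = cyl k m \<phi> j a i b" by (simp add: pq CY)
    also have "\<dots> = cyl k m a0 j a i b + (\<Sum>r\<in>{2..k+1}. cyl k m (\<psi> r) j a i b)"
      unfolding phi by (simp add: cyl_add cyl_sum) (simp add: cyl_def)
    also have "(\<Sum>r\<in>{2..k+1}. cyl k m (\<psi> r) j a i b) = 0"
      using psi cyl_psi by simp
    also have "cyl k m a0 j a i b = (2 * \<gamma> * rho_y k j i - \<alpha> * rho_h k j i) * idW m a b"
      unfolding a0e using cyl_aset[OF B] by simp
    finally show "commV k m (Yop k m) \<phi> p q = (\<lambda>p q. tens (\<lambda>j i. 0 * rho_x k j i + (2*\<gamma>) * rho_y k j i + (-\<alpha>) * rho_h k j i) (idW m) p q + tens (idK k) (\<lambda>a b. 0) p q) p q"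
      by (simp add: pq tens_def algebra_simps)
  qed
  moreover have "(\<lambda>a b. 0::real) \<in> glW m" by (simp add: glW_def)
  ultimately show ?thesis unfolding aset_def by blast
qed


lemma part1a:
  assumes k3: "k \<ge> 3" and m2: "m \<ge> 2" and phiV: "\<phi> \<in> glV k m"
    and T: "commV k m (Yop k m) \<phi> \<in> aset k m"
  shows "\<exists>a0\<in>aset k m. \<exists>\<psi>. (\<forall>i\<in>{2..k+1}. \<psi> i \<in> Amod k m i) \<and>
           \<phi> = (\<lambda>p q. a0 p q + (\<Sum>i\<in>{2..k+1}. \<psi> i p q))"
proof -
  have m0: "0 < m" using m2 by simp
  have k0: "0 < k" using k3 by simp
  have sup: "\<phi> (j,a) (i,b) = 0" if "\<not> (j \<le> k \<and> a < m \<and> i \<le> k \<and> b < m)" for j a i b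
    using phiV that by (auto simp: glV_def IV_def)
  obtain \<alpha> \<beta> \<gamma> B where B: "B \<in> glW m" and Te: "commV k m (Yop k m) \<phi> =
     (\<lambda>p q. tens (\<lambda>j i. \<alpha> * rho_x k j i + \<beta> * rho_y k j i + \<gamma> * rho_h k j i) (idW m) p q + tens (idK k) B p q)"
    using T unfolding aset_def by blast
  have Tc: "cyl k m \<phi> j a i b = (\<alpha> * rho_x k j i + \<beta> * rho_y k j i + \<gamma> * rho_h k j i) * idW m a b + idK k j i * B a b" for j a i b
    using fun_cong[OF fun_cong[OF Te, of "(j,a)"], of "(i,b)"] by (simp add: CY tens_def)
  define G where "G t = cc k t * cc k (t+1) * \<phi> (t,0) (t+2,0)" for t
  have Gj: "cc k j * \<alpha> = (if 1 \<le> j then G (j-1) else 0) - G j" if j: "j < k" for j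
  proof -
    have "cyl k m \<phi> j 0 (j+1) 0 = \<alpha>" using Tc[of j 0 "j+1" 0] j m0
      by (simp add: rho_x_def rho_y_cc rho_h_def idK_def idW_def)
    moreover have "cc k j * cyl k m \<phi> j 0 (j+1) 0 = (if 1 \<le> j then G (j-1) else 0) - G j"
    proof -
      have g1: "(if 1 \<le> j then G (j-1) else 0) = (if 1 \<le> j then cc k j * (cc k (j-1) * \<phi> (j-1,0) (j+1,0)) else 0)"
        by (cases j) (auto simp: G_def)
      have g2: "G j = (if j + 1 < k then cc k j * (\<phi> (j,0) (j+1+1,0) * cc k (j+1)) else 0)"
      proof (cases "j+1 < k")
        case True thus ?thesis by (simp add: G_def numeral_2_eq_2)
      next
        case False hence "j + 1 = k" using j by simp
        thus ?thesis by (simp add: G_def cc_kk)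
      qed
      show ?thesis unfolding g1 g2 cyl_def using j m0 by (simp add: right_diff_distrib)
    qed
    ultimately show ?thesis by simp
  qed
  have "(\<Sum>j<k. cc k j * \<alpha>) = (\<Sum>j<k. (if 1 \<le> j then G (j-1) else 0) - G j)"
    by (rule sum.cong) (auto simp: Gj)
  also have "\<dots> = - G (k-1)" using tele[of G "k-1"] k0 by simp
  also have "G (k-1) = 0" using k0 by (simp add: G_def cc_kk)
  finally have "(\<Sum>j<k. cc k j) * \<alpha> = 0" by (simp add: sum_distrib_right)
  moreover have "(\<Sum>j<k. cc k j) > 0"
    by (rule sum_pos2[of _ 0]) (use k0 in \<open>auto intro: cc_pos cc_nonneg\<close>)
  ultimately have a0: "\<alpha> = 0" by simp
  have B0: "B a b = 0" for a b
  proof (cases "a < m \<and> b < m")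
    case False thus ?thesis using B leI unfolding glW_def by blast
  next
    case True
    define H where "H t = cc k t * \<phi> (t,a) (t+1,b)" for t
    have Hj: "\<gamma> * (real k - 2 * real j) * idW m a b + B a b = (if 1 \<le> j then H (j-1) else 0) - H j"
      if jk: "j < Suc k" for j
    proof -
      have "cyl k m \<phi> j a j b = \<gamma> * (real k - 2 * real j) * idW m a b + B a b"
        using Tc[of j a j b] jk a0 by (simp add: rho_x_def rho_y_cc rho_h_def idK_def)
      moreover have "cyl k m \<phi> j a j b = (if 1 \<le> j then H (j-1) else 0) - H j"
      proof -
        have h1: "(if 1 \<le> j then H (j-1) else 0) = (if 1 \<le> j then cc k (j-1) * \<phi> (j-1,a) (j,b) else 0)"
          by (cases j) (auto simp: H_def)
        have h2: "H j = (if j < k then \<phi> (j,a) (j+1,b) * cc k j else 0)"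
        proof (cases "j < k")
          case True thus ?thesis by (simp add: H_def)
        next
          case False hence "j = k" using jk by simp
          thus ?thesis by (simp add: H_def cc_kk)
        qed
        show ?thesis unfolding h1 h2 cyl_def using jk True by simp
      qed
      ultimately show ?thesis by simp
    qed
    have "(\<Sum>j<Suc k. \<gamma> * (real k - 2 * real j) * idW m a b + B a b) = (\<Sum>j<Suc k. (if 1 \<le> j then H (j-1) else 0) - H j)"
      by (rule sum.cong) (auto simp: Hj)
    also have "\<dots> = - H k" by (rule tele)
    also have "H k = 0" by (simp add: H_def cc_kk)
    finally have "(\<Sum>j<Suc k. \<gamma> * idW m a b * (real k - 2 * real j)) + real (Suc k) * B a b = 0"
      by (simp add: sum.distrib mult_ac)
    moreover have "(\<Sum>j<Suc k. \<gamma> * idW m a b * (real k - 2 * real j)) = 0"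
    proof -
      have tr0: "(\<Sum>j<Suc k. real k - 2 * real j) = 0" using trh[of k k] by (simp add: algebra_simps)
      have "(\<Sum>j<Suc k. \<gamma> * idW m a b * (real k - 2 * real j)) = \<gamma> * idW m a b * (\<Sum>j<Suc k. real k - 2 * real j)"
        by (simp only: sum_distrib_left)
      thus ?thesis by (simp only: tr0 mult_zero_right)
    qed
    ultimately show ?thesis by simp
  qed
  define P where "P j i = (-\<gamma>) * rho_x k j i + 0 * rho_y k j i + (\<beta>/2) * rho_h k j i" for j i
  define \<phi>' where "\<phi>' = (\<lambda>p q. \<phi> p q - tens P (idW m) p q)"
  have cyl0: "cyl k m \<phi>' j a i b = 0" for j a i b
  proof -
    have "commy k P j i = \<gamma> * rho_h k j i + \<beta> * rho_y k j i"
      unfolding P_def commy_lin3 commy_x commy_h commy_y by simp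
    thus ?thesis unfolding \<phi>'_def cyl_diff using Tc[of j a i b] a0 B0
      by (simp add: cyl_tens idW_glW algebra_simps)
  qed
  have sup': "\<phi>' (j,a) (i,b) = 0" if nn: "\<not> (j \<le> k \<and> a < m \<and> i \<le> k \<and> b < m)" for j a i b
    using sup[OF nn] nn by (auto simp: \<phi>'_def tens_def P_def rho_x_def rho_y_def rho_h_def idW_def)
  define C where "C n a b = \<phi>' (n,a) (0,b) / pc k 0 n" for n a b
  have Cg: "C n \<in> glW m" for n
    unfolding glW_def C_def using sup' by auto
  define S where "S = (\<lambda>p q. \<Sum>n\<in>{0..k}. tens (ypow k n) (C n) p q)"
  have Spt: "S (j,a) (i,b) = (\<Sum>n\<in>{0..k}. ypow k n j i * C n a b)" for j a i b
    by (simp add: S_def tens_def)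
  have cylS: "cyl k m S j a i b = 0" for j a i b
    unfolding S_def cyl_sum by (simp add: cyl_tens Cg commy_ypow)
  define D where "D = (\<lambda>p q. \<phi>' p q - S p q)"
  have cylD: "cyl k m D j a i b = 0" for j a i b
    unfolding D_def cyl_diff by (simp add: cylS cyl0)
  have Ssup: "S (j,a) (i,b) = 0" if nn: "\<not> (j \<le> k \<and> a < m \<and> i \<le> k \<and> b < m)" for j a i b
    unfolding Spt
  proof (rule sum.neutral, rule ballI)
    fix n assume "n \<in> {0..k}"
    show "ypow k n j i * C n a b = 0"
    proof (cases "a < m \<and> b < m")
      case True thus ?thesis using nn by (auto simp: ypow_def)
    next
      case False thus ?thesis using Cg[of n] leI unfolding glW_def by auto
    qed
  qed
  have Dsup: "D (j,a) (i,b) = 0" if nn: "\<not> (j \<le> k \<and> a < m \<and> i \<le> k \<and> b < m)" for j a i b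
    using Ssup[OF nn] sup'[OF nn] by (simp add: D_def)
  have Dcol: "D (j,a) (0,b) = 0" for j a b
  proof (cases "j \<le> k")
    case True
    have "S (j,a) (0,b) = (\<Sum>n\<in>{0..k}. if n = j then pc k 0 j * C j a b else 0)"
      unfolding Spt by (rule sum.cong) (auto simp: ypow_n0)
    also have "\<dots> = pc k 0 j * C j a b" using True by (simp add: sum.delta)
    also have "\<dots> = \<phi>' (j,a) (0,b)" using pc_pos[of 0 j k] True by (simp add: C_def)
    finally show ?thesis by (simp add: D_def)
  next
    case False thus ?thesis using Dsup by auto
  qed
  have Dz: "\<forall>j a b. D (j,a) (i,b) = 0" for i
  proof (induction i)
    case 0 then show ?case using Dcol by simp
  next
    case (Suc i)
    show ?case
    proof (intro allI)
      fix j a b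
      show "D (j,a) (Suc i, b) = 0"
      proof (cases "i < k \<and> b < m")
        case True
        have "cyl k m D j a i b = 0" by (rule cylD)
        hence "(if 1 \<le> j \<and> j \<le> k \<and> a < m then cc k (j-1) * D (j-1,a) (i,b) else 0) - D (j,a) (i+1,b) * cc k i = 0"
          using True by (simp add: cyl_def)
        moreover have d0: "D (j-1,a) (i,b) = 0" using Suc.IH by blast
        have "(if 1 \<le> j \<and> j \<le> k \<and> a < m then cc k (j-1) * D (j-1,a) (i,b) else 0) = 0"
          by (simp only: d0 mult_zero_right if_cancel)
        ultimately have "D (j,a) (i+1,b) * cc k i = 0" by linarith
        thus ?thesis using cc_pos[of i k] True by simp
      next
        case False thus ?thesis using Dsup by auto
      qed
    qed
  qed
  have phi_eq: "\<phi> (j,a) (i,b) = P j i * idW m a b + (\<Sum>n\<in>{0..k}. ypow k n j i * C n a b)" for j a i b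
  proof -
    have "\<phi> (j,a) (i,b) - P j i * idW m a b = S (j,a) (i,b)"
      using Dz[of i] by (simp add: D_def \<phi>'_def tens_def)
    thus ?thesis using Spt[of j a i b] by linarith
  qed
  define t where "t = (\<Sum>a<m. C 1 a a)"
  define C1 where "C1 a b = C 1 a b - t / real m * idW m a b" for a b
  define a0 where "a0 = (\<lambda>p q. tens (\<lambda>j i. (-\<gamma>) * rho_x k j i + (t / real m) * rho_y k j i + (\<beta>/2) * rho_h k j i) (idW m) p q
                          + tens (idK k) (C 0) p q)"
  define \<psi> where "\<psi> i = (if i = 2 then tens (\<lambda>a b. 1 * rho_y k a b) C1
      else tens (\<lambda>a b. 1 * mpow {0..k} (i-1) (rho_y k) a b) (C (i-1)))" for i
  have a0A: "a0 \<in> aset k m" unfolding a0_def aset_def using Cg[of 0] by blast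
  have C1s: "C1 \<in> slW m"
  proof -
    have "C1 \<in> glW m" using Cg[of 1] by (auto simp: glW_def C1_def idW_def)
    moreover have "(\<Sum>a<m. C1 a a) = t - t / real m * (\<Sum>a<m. idW m a a)"
      by (simp add: C1_def sum_subtractf sum_distrib_left t_def)
    moreover have "(\<Sum>a<m. idW m a a) = real m" by (simp add: idW_def)
    ultimately show ?thesis using m0 by (simp add: slW_def)
  qed
  have psiA: "\<forall>i\<in>{2..k+1}. \<psi> i \<in> Amod k m i"
  proof
    fix i assume "i \<in> {2..k+1}"
    show "\<psi> i \<in> Amod k m i"
    proof (cases "i = 2")
      case True
      have "\<exists>c B. B \<in> slW m \<and> \<psi> i = tens (\<lambda>a b. c * rho_y k a b) B"
        using C1s True unfolding \<psi>_def by (intro exI[of _ 1] exI[of _ C1]) simp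
      thus ?thesis unfolding Amod_def using True by simp
    next
      case False
      have "\<exists>c B. B \<in> glW m \<and> \<psi> i = tens (\<lambda>a b. c * mpow {0..k} (i-1) (rho_y k) a b) B"
        using Cg False unfolding \<psi>_def by (intro exI[of _ 1] exI[of _ "C (i-1)"]) simp
      thus ?thesis unfolding Amod_def using False by simp
    qed
  qed
  have eq: "\<phi> = (\<lambda>p q. a0 p q + (\<Sum>i\<in>{2..k+1}. \<psi> i p q))"
  proof (intro ext)
    fix p q :: "nat \<times> nat"
    obtain j a i b where pq: "p = (j,a)" "q = (i,b)" by (cases p, cases q)
    have psipt: "\<psi> r (j,a) (i,b) = ypow k (r-1) j i * (if r = 2 then C1 a b else C (r-1) a b)" for r
      unfolding \<psi>_def tens_def mpow_ypow by (simp add: rho_y_ypow)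
    have "(\<Sum>r\<in>{2..k+1}. \<psi> r (j,a) (i,b)) = (\<Sum>r\<in>{Suc 1..Suc k}. \<psi> r (j,a) (i,b))"
      proof -
        have "{2..k+1} = {Suc 1..Suc k}" by auto
        thus ?thesis by (simp only:)
      qed
    also have "\<dots> = (\<Sum>n\<in>{1..k}. \<psi> (Suc n) (j,a) (i,b))" by (rule sum.shift_bounds_cl_Suc_ivl)
    also have "\<dots> = (\<Sum>n\<in>{1..k}. ypow k n j i * C n a b - (if n = 1 then ypow k 1 j i * (t / real m * idW m a b) else 0))"
      by (rule sum.cong) (auto simp: psipt C1_def algebra_simps)
    also have "\<dots> = (\<Sum>n\<in>{1..k}. ypow k n j i * C n a b) - ypow k 1 j i * (t / real m * idW m a b)"
      using k0 by (simp add: sum_subtractf sum.delta)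
    finally have s1: "(\<Sum>r\<in>{2..k+1}. \<psi> r (j,a) (i,b)) = (\<Sum>n\<in>{1..k}. ypow k n j i * C n a b) - ypow k 1 j i * (t / real m * idW m a b)" .
    have s2: "(\<Sum>n\<in>{0..k}. ypow k n j i * C n a b) = ypow k 0 j i * C 0 a b + (\<Sum>n\<in>{1..k}. ypow k n j i * C n a b)"
      by (simp add: sum.atLeast_Suc_atMost)
    show "\<phi> p q = a0 p q + (\<Sum>i\<in>{2..k+1}. \<psi> i p q)"
      unfolding pq phi_eq s2 using s1
      by (simp add: a0_def tens_def P_def rho_y_ypow idK_ypow algebra_simps)
  qed
  show ?thesis using a0A psiA eq by blast
qed


theorem theorem2:
  fixes k m :: nat
  assumes "k \<ge> 3" and "m \<ge> 2"
  shows "(\<forall>\<phi> \<in> glV k m.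
            commV k m (Yop k m) \<phi> \<in> aset k m \<longleftrightarrow>
            (\<exists>a0 \<in> aset k m. \<exists>\<psi>. (\<forall>i\<in>{2..k+1}. \<psi> i \<in> Amod k m i) \<and>
                \<phi> = (\<lambda>p q. a0 p q + (\<Sum>i\<in>{2..k+1}. \<psi> i p q))))
       \<and> (\<forall>\<psi>. (\<forall>i\<in>{2..k+1}. \<psi> i \<in> Amod k m i) \<longrightarrow>
              (\<lambda>p q. \<Sum>i\<in>{2..k+1}. \<psi> i p q) \<in> aset k m \<longrightarrow>
              (\<forall>i\<in>{2..k+1}. \<psi> i \<in> aset k m))
       \<and> (\<forall>i\<in>{2..k+1}. \<forall>\<phi> \<in> Amod k m i. cochain_degree k m (cphi k m \<phi>) (int i))"
proof (intro conjI)
  show "\<forall>\<phi> \<in> glV k m.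
            commV k m (Yop k m) \<phi> \<in> aset k m \<longleftrightarrow>
            (\<exists>a0 \<in> aset k m. \<exists>\<psi>. (\<forall>i\<in>{2..k+1}. \<psi> i \<in> Amod k m i) \<and>
                \<phi> = (\<lambda>p q. a0 p q + (\<Sum>i\<in>{2..k+1}. \<psi> i p q)))"
  proof (intro ballI iffI)
    fix \<phi> assume "\<phi> \<in> glV k m" "commV k m (Yop k m) \<phi> \<in> aset k m"
    thus "\<exists>a0 \<in> aset k m. \<exists>\<psi>. (\<forall>i\<in>{2..k+1}. \<psi> i \<in> Amod k m i) \<and>
                \<phi> = (\<lambda>p q. a0 p q + (\<Sum>i\<in>{2..k+1}. \<psi> i p q))"
      by (rule part1a[OF assms])
  next
    fix \<phi> assume "\<exists>a0 \<in> aset k m. \<exists>\<psi>. (\<forall>i\<in>{2..k+1}. \<psi> i \<in> Amod k m i) \<and>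
                \<phi> = (\<lambda>p q. a0 p q + (\<Sum>i\<in>{2..k+1}. \<psi> i p q))"
    then obtain a0 \<psi> where "a0 \<in> aset k m" "\<forall>i\<in>{2..k+1}. \<psi> i \<in> Amod k m i"
       "\<phi> = (\<lambda>p q. a0 p q + (\<Sum>i\<in>{2..k+1}. \<psi> i p q))" by blast
    thus "commV k m (Yop k m) \<phi> \<in> aset k m" by (rule part1b)
  qed
  show "\<forall>\<psi>. (\<forall>i\<in>{2..k+1}. \<psi> i \<in> Amod k m i) \<longrightarrow>
              (\<lambda>p q. \<Sum>i\<in>{2..k+1}. \<psi> i p q) \<in> aset k m \<longrightarrow>
              (\<forall>i\<in>{2..k+1}. \<psi> i \<in> aset k m)"
    using part2[OF assms] by blast
  show "\<forall>i\<in>{2..k+1}. \<forall>\<phi> \<in> Amod k m i. cochain_degree k m (cphi k m \<phi>) (int i)"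
    using part3 by blast
qed

end
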